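(* Let $X$ be a locally compact Hausdorff space and let $p,q\in\mathrm{RP}_{p.w.}(X)$ with $p\le q$ and $p\subseteq\!\subseteq q$. Then for each $i\ge1$, $R_{\ge i}(p)\subseteq\!\subseteq R_{\ge i}(q)$, i.e. the closure of $R_{\ge i}(p)$ is compact and contained in $R_{\ge i}(q)$.
   Context: $\mathcal K$ is the compact operators on $\ell_2(\mathbb N)$. $\mathrm{RP}_{p.w.}(X)$ is the set of maps $X\to B(\ell_2(\mathbb N))$ of the form $x\mapsto\chi_{(0,\infty)}(a(x))$ for $a\in C_0(X,\mathcal K)^+$. For $p\le q$ in $\mathrm{RP}_{p.w.}(X)$, $p\subseteq\!\subseteq q$ means there is $a\in C_0(X,\mathcal K)^+$ with $a(x)p(x)=p(x)$ and $q(x)a(x)=a(x)$ for all $x$. $R_{\ge i}(p):=\{x\in X:\mathrm{Rank}\,p(x)\ge i\}$. For sets, $A\subseteq\!\subseteq B$ means $\overline A$ is compact and $\overline A\subseteq B$. *)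

theory Defs
  imports "HOL-Analysis.Analysis"
begin

text \<open>Operators on l2(N) are represented by
functions on all sequences which vanish off l2 (so that they are uniquely
determined by their action on l2).\<close>

type_synonym seq = "nat \<Rightarrow> complex"
type_synonym l2op = "seq \<Rightarrow> seq"

definition l2 :: "seq set" where
  "l2 = {f. summable (\<lambda>n. (cmod (f n))^2)}"

definition l2_norm :: "seq \<Rightarrow> real" where
  "l2_norm f = sqrt (\<Sum>n. (cmod (f n))^2)"

definition l2_inner :: "seq \<Rightarrow> seq \<Rightarrow> complex" where
  "l2_inner f g = (\<Sum>n. cnj (f n) * g n)"

definition bdd_l2op :: "l2op \<Rightarrow> bool" where
  "bdd_l2op T \<longleftrightarrow>
     (\<forall>f\<in>l2. T f \<in> l2) \<and>
     (\<forall>f\<in>l2. \<forall>g\<in>l2. \<forall>c. T (\<lambda>n. c * f n + g n) = (\<lambda>n. c * T f n + T g n)) \<and>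
     (\<exists>K. \<forall>f\<in>l2. l2_norm (T f) \<le> K * l2_norm f) \<and>
     (\<forall>f. f \<notin> l2 \<longrightarrow> T f = (\<lambda>_. 0))"

definition op_norm :: "l2op \<Rightarrow> real" where
  "op_norm T = Sup {l2_norm (T f) | f. f \<in> l2 \<and> l2_norm f \<le> 1}"

definition op_diff :: "l2op \<Rightarrow> l2op \<Rightarrow> l2op" where
  "op_diff S T = (\<lambda>f n. S f n - T f n)"

definition cpt_l2op :: "l2op \<Rightarrow> bool" where
  "cpt_l2op T \<longleftrightarrow> bdd_l2op T \<and>
     (\<forall>s :: nat \<Rightarrow> seq. (\<forall>n. s n \<in> l2 \<and> l2_norm (s n) \<le> 1) \<longrightarrow>
        (\<exists>(r :: nat \<Rightarrow> nat) g. strict_mono r \<and> g \<in> l2 \<and>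
               (\<lambda>n. l2_norm (\<lambda>k. T (s (r n)) k - g k)) \<longlonglongrightarrow> 0))"

definition pos_l2op :: "l2op \<Rightarrow> bool" where
  "pos_l2op T \<longleftrightarrow> bdd_l2op T \<and>
     (\<forall>f\<in>l2. Im (l2_inner f (T f)) = 0 \<and> 0 \<le> Re (l2_inner f (T f)))"

definition op_le :: "l2op \<Rightarrow> l2op \<Rightarrow> bool" where
  "op_le S T \<longleftrightarrow> pos_l2op (op_diff T S)"

text \<open>C_0(X, K)^+ : norm-continuous maps into positive compact operators
vanishing at infinity.\<close>
definition C0K_pos :: "('a::topological_space \<Rightarrow> l2op) set" where
  "C0K_pos = {a. (\<forall>x. cpt_l2op (a x) \<and> pos_l2op (a x)) \<and>
      (\<forall>x. \<forall>e>0. eventually (\<lambda>y. op_norm (op_diff (a y) (a x)) < e) (at x)) \<and>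
      (\<forall>e>0. compact {x. e \<le> op_norm (a x)})}"

definition l2_closure :: "seq set \<Rightarrow> seq set" where
  "l2_closure S = {g\<in>l2. \<forall>e>0. \<exists>h\<in>S. l2_norm (\<lambda>k. g k - h k) < e}"

text \<open>For a positive operator T, chi_(0,inf)(T) is the orthogonal projection
onto the closure of the range of T (the support/range projection).\<close>
definition range_proj :: "l2op \<Rightarrow> l2op" where
  "range_proj T = (THE P. bdd_l2op P \<and> (\<forall>f\<in>l2. P (P f) = P f) \<and>
      (\<forall>f\<in>l2. \<forall>g\<in>l2. l2_inner (P f) g = l2_inner f (P g)) \<and>
      P ` l2 = l2_closure (T ` l2))"

definition RP_pw :: "('a::topological_space \<Rightarrow> l2op) set" where
  "RP_pw = {p. \<exists>a\<in>C0K_pos. \<forall>x. p x = range_proj (a x)}"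

definition rp_cc :: "('a::topological_space \<Rightarrow> l2op) \<Rightarrow> ('a \<Rightarrow> l2op) \<Rightarrow> bool" where
  "rp_cc p q \<longleftrightarrow> (\<exists>a\<in>C0K_pos. \<forall>x. (\<forall>f\<in>l2. a x (p x f) = p x f \<and> q x (a x f) = a x f))"

definition rank_ge :: "l2op \<Rightarrow> nat \<Rightarrow> bool" where
  "rank_ge T i \<longleftrightarrow> (\<exists>v :: nat \<Rightarrow> seq. (\<forall>j<i. v j \<in> T ` l2) \<and>
      (\<forall>c :: nat \<Rightarrow> complex. (\<forall>k. (\<Sum>j<i. c j * v j k) = 0) \<longrightarrow> (\<forall>j<i. c j = 0)))"

definition R_ge :: "nat \<Rightarrow> ('a \<Rightarrow> l2op) \<Rightarrow> 'a set" where
  "R_ge i p = {x. rank_ge (p x) i}"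

definition set_cc :: "'a::topological_space set \<Rightarrow> 'a set \<Rightarrow> bool" where
  "set_cc A B \<longleftrightarrow> compact (closure A) \<and> closure A \<subseteq> B"

end

theory Submission
  imports Defs
begin

lemma l2_zero: "(\<lambda>n. 0) \<in> l2" by (simp add: l2_def)

lemma sq_bound: "(cmod (c * a + b))^2 \<le> 2 * (cmod c)^2 * (cmod a)^2 + 2 * (cmod b)^2"
proof -
  have "cmod (c * a + b) \<le> cmod c * cmod a + cmod b"
    by (metis norm_mult norm_triangle_ineq)
  then have "(cmod (c * a + b))^2 \<le> (cmod c * cmod a + cmod b)^2"
    by (simp add: power_mono)
  also have "\<dots> \<le> 2 * (cmod c * cmod a)^2 + 2 * (cmod b)^2"
  proof -
    have "0 \<le> (cmod c * cmod a - cmod b)^2" by simp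
    then show ?thesis by (simp add: power2_diff power2_sum)
  qed
  also have "\<dots> = 2 * (cmod c)^2 * (cmod a)^2 + 2 * (cmod b)^2"
    by (simp add: power_mult_distrib)
  finally show ?thesis .
qed

lemma l2_lin: assumes "f \<in> l2" "g \<in> l2" shows "(\<lambda>n. c * f n + g n) \<in> l2"
proof -
  have s: "summable (\<lambda>n. 2 * (cmod c)^2 * (cmod (f n))^2 + 2 * (cmod (g n))^2)"
    using assms unfolding l2_def by (intro summable_add summable_mult) auto
  show ?thesis unfolding l2_def mem_Collect_eq
    by (rule summable_comparison_test[OF _ s]) (auto intro!: exI[of _ 0] sq_bound)
qed

lemma l2_scale: "f \<in> l2 \<Longrightarrow> (\<lambda>n. c * f n) \<in> l2"
  using l2_lin[OF _ l2_zero, of f c] by simp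

lemma l2_norm_nonneg: "f \<in> l2 \<Longrightarrow> 0 \<le> l2_norm f"
  unfolding l2_norm_def l2_def by (simp add: suminf_nonneg)

lemma l2_norm_scale: assumes "f \<in> l2" shows "l2_norm (\<lambda>n. c * f n) = cmod c * l2_norm f"
proof -
  have s: "summable (\<lambda>n. (cmod (f n))^2)" using assms unfolding l2_def by auto
  have "(\<Sum>n. (cmod (c * f n))^2) = (cmod c)^2 * (\<Sum>n. (cmod (f n))^2)"
    by (simp add: norm_mult power_mult_distrib suminf_mult[OF s])
  then show ?thesis unfolding l2_norm_def by (simp add: real_sqrt_mult)
qed

lemma l2_norm_zero: assumes "f \<in> l2" "l2_norm f = 0" shows "f = (\<lambda>n. 0)"
proof -
  have s: "summable (\<lambda>n. (cmod (f n))^2)" using assms unfolding l2_def by auto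
  have "(\<Sum>n. (cmod (f n))^2) = 0" using assms(2) unfolding l2_norm_def by simp
  then have "\<forall>n. (cmod (f n))^2 = 0" using suminf_eq_zero_iff[OF s] by auto
  then show ?thesis by auto
qed

lemma l2_norm_diff: assumes "f \<in> l2" "g \<in> l2"
  shows "l2_norm (\<lambda>k. f k - g k) \<le> sqrt (2 * (l2_norm f)^2 + 2 * (l2_norm g)^2)"
proof -
  have sf: "summable (\<lambda>n. (cmod (f n))^2)" and sg: "summable (\<lambda>n. (cmod (g n))^2)"
    using assms unfolding l2_def by auto
  have sd: "summable (\<lambda>n. (cmod (f n - g n))^2)"
    using l2_lin[OF assms(2) assms(1), of "-1"] unfolding l2_def by simp
  have b: "(cmod (f n - g n))^2 \<le> 2 * (cmod (f n))^2 + 2 * (cmod (g n))^2" for n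
    using sq_bound[of "-1" "g n" "f n"] by (simp add: norm_minus_commute)
  have "(\<Sum>n. (cmod (f n - g n))^2) \<le> (\<Sum>n. 2 * (cmod (f n))^2 + 2 * (cmod (g n))^2)"
    by (rule suminf_le[OF b sd]) (intro summable_add summable_mult sf sg)
  also have "\<dots> = 2 * (\<Sum>n. (cmod (f n))^2) + 2 * (\<Sum>n. (cmod (g n))^2)"
    using sf sg by (simp add: suminf_add[symmetric] suminf_mult summable_mult)
  finally have "(\<Sum>n. (cmod (f n - g n))^2) \<le> 2 * (\<Sum>n. (cmod (f n))^2) + 2 * (\<Sum>n. (cmod (g n))^2)" .
  moreover have "(l2_norm f)^2 = (\<Sum>n. (cmod (f n))^2)" "(l2_norm g)^2 = (\<Sum>n. (cmod (g n))^2)"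
    unfolding l2_norm_def using sf sg by (auto intro!: real_sqrt_pow2 suminf_nonneg)
  ultimately show ?thesis unfolding l2_norm_def by simp
qed

lemma bdd_in_l2: "bdd_l2op T \<Longrightarrow> T f \<in> l2"
  unfolding bdd_l2op_def using l2_zero by metis

lemma bdd_lin: "bdd_l2op T \<Longrightarrow> f \<in> l2 \<Longrightarrow> g \<in> l2 \<Longrightarrow> T (\<lambda>n. c * f n + g n) = (\<lambda>n. c * T f n + T g n)"
  unfolding bdd_l2op_def by blast

lemma bdd_zero: assumes "bdd_l2op T" shows "T (\<lambda>n. 0) = (\<lambda>n. 0)"
proof -
  have h: "T (\<lambda>n. 1 * 0 + 0) = (\<lambda>n. 1 * T (\<lambda>n. 0) n + T (\<lambda>n. 0) n)"
    by (rule bdd_lin[OF assms l2_zero l2_zero])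
  have "T (\<lambda>n. 0) k = 0" for k using fun_cong[OF h, of k] by simp
  then show ?thesis by auto
qed

lemma bdd_scale: assumes "bdd_l2op T" "f \<in> l2" shows "T (\<lambda>n. c * f n) = (\<lambda>n. c * T f n)"
  using bdd_lin[OF assms l2_zero, of c] bdd_zero[OF assms(1)] by simp

lemma bdd_sum: fixes m :: nat assumes "bdd_l2op T" "\<forall>j<m. w j \<in> l2"
  shows "(\<lambda>k. \<Sum>j<m. c j * w j k) \<in> l2 \<and> T (\<lambda>k. \<Sum>j<m. c j * w j k) = (\<lambda>k. \<Sum>j<m. c j * T (w j) k)"
  using assms(2)
proof (induction m)
  case 0
  then show ?case using l2_zero bdd_zero[OF assms(1)] by simp
next
  case (Suc m)
  then have IH: "(\<lambda>k. \<Sum>j<m. c j * w j k) \<in> l2"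
    "T (\<lambda>k. \<Sum>j<m. c j * w j k) = (\<lambda>k. \<Sum>j<m. c j * T (w j) k)" and wm: "w m \<in> l2" by auto
  have e: "(\<lambda>k. \<Sum>j<Suc m. c j * w j k) = (\<lambda>k. c m * w m k + (\<lambda>k. \<Sum>j<m. c j * w j k) k)"
    by (simp add: add.commute)
  show ?case unfolding e
    using l2_lin[OF wm IH(1)] bdd_lin[OF assms(1) wm IH(1), of "c m"] IH(2)
    by (simp add: add.commute)
qed

lemma bdd_bounded: assumes "bdd_l2op T" shows "\<exists>M. \<forall>g. g \<in> l2 \<and> l2_norm g \<le> 1 \<longrightarrow> l2_norm (T g) \<le> M"
proof -
  obtain K where K: "\<forall>f\<in>l2. l2_norm (T f) \<le> K * l2_norm f" using assms unfolding bdd_l2op_def by blast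
  have "l2_norm (T g) \<le> max K 0" if "g \<in> l2" "l2_norm g \<le> 1" for g
  proof -
    have "l2_norm (T g) \<le> K * l2_norm g" using K that by blast
    also have "\<dots> \<le> max K 0 * l2_norm g" using that(1) by (simp add: l2_norm_nonneg mult_right_mono)
    also have "\<dots> \<le> max K 0" using that l2_norm_nonneg[of g]
      by (simp add: mult_left_le)
    finally show ?thesis .
  qed
  then show ?thesis by blast
qed

lemma op_norm_ge1:
  assumes "\<exists>M. \<forall>g. g \<in> l2 \<and> l2_norm g \<le> 1 \<longrightarrow> l2_norm (T g) \<le> M"
    and "f \<in> l2" "f \<noteq> (\<lambda>n. 0)" "T f = f" "\<forall>c. T (\<lambda>n. c * f n) = (\<lambda>n. c * T f n)"
  shows "1 \<le> op_norm T"
proof -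
  have nz: "l2_norm f \<noteq> 0" using l2_norm_zero assms(2,3) by blast
  then have pos: "l2_norm f > 0" using l2_norm_nonneg[of f] assms(2) by linarith
  define c where "c = complex_of_real (1 / l2_norm f)"
  define g where "g = (\<lambda>n. c * f n)"
  have gl2: "g \<in> l2" unfolding g_def using l2_scale assms(2) by blast
  have "l2_norm g = cmod c * l2_norm f" unfolding g_def by (rule l2_norm_scale[OF assms(2)])
  also have "\<dots> = 1" unfolding c_def using pos by (simp add: norm_divide)
  finally have ng: "l2_norm g = 1" .
  have Tg: "T g = g" unfolding g_def using assms(4,5) by simp
  have mem: "1 \<in> {l2_norm (T f) | f. f \<in> l2 \<and> l2_norm f \<le> 1}"
    using gl2 ng Tg by (metis (mono_tags, lifting) mem_Collect_eq order_refl)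
  obtain M where M: "\<forall>g. g \<in> l2 \<and> l2_norm g \<le> 1 \<longrightarrow> l2_norm (T g) \<le> M" using assms(1) by blast
  have bdd: "bdd_above {l2_norm (T f) | f. f \<in> l2 \<and> l2_norm f \<le> 1}"
    using M by (auto intro!: bdd_aboveI[of _ M])
  show ?thesis unfolding op_norm_def by (rule cSup_upper2[OF mem order_refl bdd])
qed

lemma op_diff_bounded: assumes "bdd_l2op S" "bdd_l2op T"
  shows "\<exists>M. \<forall>g. g \<in> l2 \<and> l2_norm g \<le> 1 \<longrightarrow> l2_norm (op_diff S T g) \<le> M"
proof -
  obtain M1 where M1: "\<forall>g. g \<in> l2 \<and> l2_norm g \<le> 1 \<longrightarrow> l2_norm (S g) \<le> M1" using bdd_bounded[OF assms(1)] by blast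
  obtain M2 where M2: "\<forall>g. g \<in> l2 \<and> l2_norm g \<le> 1 \<longrightarrow> l2_norm (T g) \<le> M2" using bdd_bounded[OF assms(2)] by blast
  have "l2_norm (op_diff S T g) \<le> sqrt (2 * M1^2 + 2 * M2^2)" if "g \<in> l2" "l2_norm g \<le> 1" for g
  proof -
    have a: "l2_norm (S g) \<le> M1" "l2_norm (T g) \<le> M2" using M1 M2 that by auto
    have "l2_norm (op_diff S T g) \<le> sqrt (2 * (l2_norm (S g))^2 + 2 * (l2_norm (T g))^2)"
      unfolding op_diff_def by (rule l2_norm_diff[OF bdd_in_l2[OF assms(1)] bdd_in_l2[OF assms(2)]])
    also have "\<dots> \<le> sqrt (2 * M1^2 + 2 * M2^2)"
      using a l2_norm_nonneg[of "S g"] l2_norm_nonneg[of "T g"] bdd_in_l2 assms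
      by (intro real_sqrt_le_mono add_mono mult_left_mono power_mono) auto
    finally show ?thesis .
  qed
  then show ?thesis by blast
qed

lemma op_norm_self: "op_norm (op_diff T T) = 0"
proof -
  have e: "op_diff T T = (\<lambda>f n. 0)" by (simp add: op_diff_def)
  have z: "l2_norm (\<lambda>n. 0) = 0" by (simp add: l2_norm_def)
  have "{l2_norm ((\<lambda>f n. 0) f) | f. f \<in> l2 \<and> l2_norm f \<le> 1} = {0}"
    using l2_zero z by (auto simp: z intro!: exI[of _ "\<lambda>n. 0"])
  then show ?thesis unfolding op_norm_def e by simp
qed


theorem lemma5p2:
  fixes p q :: "'a::t2_space \<Rightarrow> l2op"
  assumes "locally_compact_space (euclidean :: 'a topology)"
    and "p \<in> RP_pw" and "q \<in> RP_pw"
    and "\<forall>x. op_le (p x) (q x)"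
    and "rp_cc p q"
    and "i \<ge> 1"
  shows "set_cc (R_ge i p) (R_ge i q)"
proof -
  obtain a where aC: "a \<in> C0K_pos"
    and ap: "\<forall>x. \<forall>f\<in>l2. a x (p x f) = p x f \<and> q x (a x f) = a x f"
    using assms(5) unfolding rp_cc_def by blast
  have bdd: "\<And>x. bdd_l2op (a x)" using aC unfolding C0K_pos_def cpt_l2op_def by blast
  have cont: "\<And>x e. e > 0 \<Longrightarrow> eventually (\<lambda>y. op_norm (op_diff (a y) (a x)) < e) (at x)"
    using aC unfolding C0K_pos_def by blast
  have cpt: "compact {x. 1 \<le> op_norm (a x)}" using aC unfolding C0K_pos_def by auto
  let ?S = "R_ge i p"
  have fixw: "a yy g = g \<and> g \<in> l2" if hw: "g \<in> p yy ` l2" for g :: seq and yy :: 'a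
  proof -
    obtain f where f: "f \<in> l2" "g = p yy f" using hw by blast
    have "a yy g = g" using ap f by auto
    moreover have "a yy g \<in> l2" by (rule bdd_in_l2[OF bdd])
    ultimately show ?thesis by simp
  qed
  have A: "?S \<subseteq> {x. 1 \<le> op_norm (a x)}"
  proof
    fix x assume "x \<in> ?S"
    then obtain v where v: "\<forall>j<i. v j \<in> p x ` l2"
      and ind: "\<forall>c :: nat \<Rightarrow> complex. (\<forall>k. (\<Sum>j<i. c j * v j k) = 0) \<longrightarrow> (\<forall>j<i. c j = 0)"
      unfolding R_ge_def rank_ge_def by blast
    have i0: "0 < i" using assms(6) by simp
    have fx: "a x (v 0) = v 0" "v 0 \<in> l2" using fixw[of "v 0" x] v i0 by auto
    have nz: "v 0 \<noteq> (\<lambda>n. 0)"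
    proof
      assume z: "v 0 = (\<lambda>n. 0)"
      define c :: "nat \<Rightarrow> complex" where "c = (\<lambda>j. if j = 0 then 1 else 0)"
      have "(\<Sum>j<i. c j * v j k) = c 0 * v 0 k" for k
        using i0 by (subst sum.remove[of _ 0]) (auto simp: c_def)
      then have "\<forall>k. (\<Sum>j<i. c j * v j k) = 0" using z by simp
      then have "c 0 = 0" using ind i0 by blast
      then show False by (simp add: c_def)
    qed
    show "x \<in> {x. 1 \<le> op_norm (a x)}"
      using op_norm_ge1[OF bdd_bounded[OF bdd] fx(2) nz fx(1)] bdd_scale[OF bdd fx(2)] by simp
  qed
  have cl: "closure ?S \<subseteq> {x. 1 \<le> op_norm (a x)}"
    by (rule closure_minimal[OF A compact_imp_closed[OF cpt]])
  have comp: "compact (closure ?S)"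
  proof -
    have "closure ?S = {x. 1 \<le> op_norm (a x)} \<inter> closure ?S" using cl by blast
    then show ?thesis using compact_Int_closed[OF cpt closed_closure[of ?S]] by simp
  qed
  have B: "closure ?S \<subseteq> R_ge i q"
  proof
    fix x assume x: "x \<in> closure ?S"
    obtain U where U: "open U" "x \<in> U" "\<forall>y\<in>U. y \<noteq> x \<longrightarrow> op_norm (op_diff (a y) (a x)) < 1"
      using cont[of 1 x] unfolding eventually_at_topological by auto
    have U1: "\<forall>y\<in>U. op_norm (op_diff (a y) (a x)) < 1" using U(3) op_norm_self by auto
    have "U \<inter> closure ?S \<noteq> {}" using x U(2) by (simp add: disjoint_iff) blast
    then obtain y where y: "y \<in> U" "y \<in> ?S" using open_Int_closure_eq_empty[OF U(1)] by blast
    have "rank_ge (p y) i" using y(2) by (simp add: R_ge_def)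
    then obtain w where w: "\<forall>j<i. w j \<in> p y ` l2"
      and ind: "\<forall>c :: nat \<Rightarrow> complex. (\<forall>k. (\<Sum>j<i. c j * w j k) = 0) \<longrightarrow> (\<forall>j<i. c j = 0)"
      unfolding rank_ge_def by blast
    have wf: "\<forall>j<i. a y (w j) = w j \<and> w j \<in> l2"
    proof (intro allI impI)
      fix j assume "j < i"
      then show "a y (w j) = w j \<and> w j \<in> l2" using fixw[of "w j" y] w by blast
    qed
    have wl2: "\<forall>j<i. w j \<in> l2" using wf by blast
    have rk: "rank_ge (a x) i"
    proof (rule ccontr)
      assume nr: "\<not> rank_ge (a x) i"
      have hv: "\<forall>j<i. a x (w j) \<in> a x ` l2" using wl2 by blast
      have nr': "\<forall>v :: nat \<Rightarrow> seq. (\<forall>j<i. v j \<in> a x ` l2) \<longrightarrow>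
          \<not> (\<forall>c :: nat \<Rightarrow> complex. (\<forall>k. (\<Sum>j<i. c j * v j k) = 0) \<longrightarrow> (\<forall>j<i. c j = 0))"
        using nr unfolding rank_ge_def by blast
      have "\<not> (\<forall>c :: nat \<Rightarrow> complex. (\<forall>k. (\<Sum>j<i. c j * a x (w j) k) = 0) \<longrightarrow> (\<forall>j<i. c j = 0))"
        using spec[OF nr', of "\<lambda>j. a x (w j)"] hv by simp
      then obtain c :: "nat \<Rightarrow> complex" where c0: "\<forall>k. (\<Sum>j<i. c j * a x (w j) k) = 0"
        and cnz: "\<exists>j<i. c j \<noteq> 0"
        by blast
      define vv where "vv = (\<lambda>k. \<Sum>j<i. c j * w j k)"
      have sx: "vv \<in> l2 \<and> a x vv = (\<lambda>k. \<Sum>j<i. c j * a x (w j) k)"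
        unfolding vv_def by (rule bdd_sum[OF bdd wl2])
      have sy: "a y vv = (\<lambda>k. \<Sum>j<i. c j * a y (w j) k)"
        unfolding vv_def using bdd_sum[OF bdd wl2] by blast
      have ay0: "(\<lambda>k. \<Sum>j<i. c j * a y (w j) k) = vv" unfolding vv_def using wf by (intro ext sum.cong) auto
      have ay: "a y vv = vv" using sy ay0 by simp
      have ax: "a x vv = (\<lambda>k. 0)" using sx c0 by auto
      have vnz: "vv \<noteq> (\<lambda>k. 0)"
      proof
        assume "vv = (\<lambda>k. 0)"
        then have "\<forall>k. (\<Sum>j<i. c j * w j k) = 0" unfolding vv_def by metis
        then show False using ind cnz by blast
      qed
      have dv: "op_diff (a y) (a x) vv = vv" unfolding op_diff_def using ay ax by simp
      have dsc: "\<forall>c. op_diff (a y) (a x) (\<lambda>n. c * vv n) = (\<lambda>n. c * op_diff (a y) (a x) vv n)"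
        unfolding op_diff_def using bdd_scale[OF bdd sx[THEN conjunct1]]
        by (simp add: algebra_simps)
      have "1 \<le> op_norm (op_diff (a y) (a x))"
        by (rule op_norm_ge1[OF op_diff_bounded[OF bdd bdd] sx[THEN conjunct1] vnz dv dsc])
      then show False using U1 y(1) by fastforce
    qed
    then obtain v where v: "\<forall>j<i. v j \<in> a x ` l2"
      and ind2: "\<forall>c :: nat \<Rightarrow> complex. (\<forall>k. (\<Sum>j<i. c j * v j k) = 0) \<longrightarrow> (\<forall>j<i. c j = 0)"
      unfolding rank_ge_def by blast
    have "\<forall>j<i. v j \<in> q x ` l2"
    proof (intro allI impI)
      fix j assume "j < i"
      then obtain f where f: "f \<in> l2" "v j = a x f" using v by blast
      then have "v j = q x (a x f)" using ap by auto
      moreover have "a x f \<in> l2" by (rule bdd_in_l2[OF bdd])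
      ultimately show "v j \<in> q x ` l2" by blast
    qed
    then show "x \<in> R_ge i q" unfolding R_ge_def rank_ge_def using ind2 by blast
  qed
  show ?thesis unfolding set_cc_def using comp B by blast
qed

end
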